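(* Let $K\ge1$, $N>0$, $P_{\max}>0$, and for $k=1,\dots,K$ let $a_k:=(\rho_{g,k}\rho_{r,kL})^2>0$ and $\Gamma_k=\frac{M a_k}{\sigma^2}c_b^2$ with $c_b=\frac{2^b}{\pi}\sin\frac{\pi}{2^b}$. Consider the problem $$\max_{\{p_k\},\{\tilde N_k\}}\ \min_{k\in\{1,\dots,K\}}\ \log_2\!\left(1+p_k\Gamma_k\tilde N_k^2\right)\quad\text{s.t.}\quad \sum_{k=1}^K p_k=P_{\max},\ \sum_{k=1}^K\tilde N_k=N,\ p_k\ge0,\ \tilde N_k\ge0.$$ Its optimal solution is $$\tilde N_k^*=\frac{\left(2a_k^{-1}\right)^{1/3}N}{\sum_{j=1}^K\left(2a_j^{-1}\right)^{1/3}},\qquad p_k^*=\frac{P_{\max}\left(\rho_{g,k}\rho_{r,kL}\tilde N_k^*\right)^{-2}}{\sum_{j=1}^K\left(\rho_{g,j}\rho_{r,jL}\tilde N_j^*\right)^{-2}},\quad k=1,\dots,K.$$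
   Context: Interpretation: a base station with $M$ antennas serves $K$ user clusters, cluster $k$ aided by a local IRS with $\tilde N_k$ elements (relaxed to a continuous value) with $b$-bit phase quantization; $p_k$ is the power allocated to the representative user $u_L^k$ of cluster $k$, $(\rho_{g,k}\rho_{r,kL})^2$ its concatenated BS–IRS–user path loss, $\sigma^2$ the noise power; under pure LoS channels and interference-free transmission its rate is $\log_2(1+p_k\Gamma_k\tilde N_k^2)$. *)

theory Defs
  imports Complex_Main
begin

definition c_b :: "nat \<Rightarrow> real" where
  "c_b b = 2 ^ b / pi * sin (pi / 2 ^ b)"

definition Gamma :: "nat \<Rightarrow> real \<Rightarrow> nat \<Rightarrow> real \<Rightarrow> real" where
  "Gamma M sigma2 b a = real M * a / sigma2 * (c_b b)\<^sup>2"

definition feasible :: "nat \<Rightarrow> real \<Rightarrow> real \<Rightarrow> (nat \<Rightarrow> real) \<Rightarrow> (nat \<Rightarrow> real) \<Rightarrow> bool" where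
  "feasible K N Pmax p Nt \<longleftrightarrow>
     (\<Sum>k=1..K. p k) = Pmax \<and> (\<Sum>k=1..K. Nt k) = N \<and>
     (\<forall>k\<in>{1..K}. p k \<ge> 0 \<and> Nt k \<ge> 0)"

definition min_rate :: "nat \<Rightarrow> (nat \<Rightarrow> real) \<Rightarrow> (nat \<Rightarrow> real) \<Rightarrow> (nat \<Rightarrow> real) \<Rightarrow> real" where
  "min_rate K G p Nt = Min ((\<lambda>k. log 2 (1 + p k * G k * (Nt k)\<^sup>2)) ` {1..K})"

end

theory Submission
  imports Defs
begin

lemma tangent_ineq:
  fixes c r x :: real
  assumes "c > 0" "r > 0" "x > 0"
  shows "3 * r^2 * c - 2 * r^3 * x \<le> c^3 / x^2"
proof -
  have "0 \<le> (c - r*x)^2 * (c + 2*r*x)" using assms by simp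
  also have "\<dots> = c^3 - (3 * r^2 * c - 2 * r^3 * x) * x^2" by (simp add: algebra_simps power2_eq_square power3_eq_cube)
  finally have "(3 * r^2 * c - 2 * r^3 * x) * x^2 \<le> c^3" by simp
  thus ?thesis using assms by (simp add: field_simps)
qed

lemma sum_tangent:
  fixes d x :: "nat \<Rightarrow> real" and S :: "nat set"
  assumes "finite S" "\<forall>k\<in>S. d k > 0 \<and> x k > 0" "sum x S = N" "N > 0" "sum d S > 0"
  shows "(sum d S)^3 / N^2 \<le> (\<Sum>k\<in>S. d k ^3 / (x k)^2)"
proof -
  define r where "r = sum d S / N"
  have r: "r > 0" using assms unfolding r_def by simp
  have "(\<Sum>k\<in>S. 3 * r^2 * d k - 2 * r^3 * x k) \<le> (\<Sum>k\<in>S. d k ^3 / (x k)^2)"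
    by (rule sum_mono) (use assms r tangent_ineq in auto)
  moreover have "(\<Sum>k\<in>S. 3 * r^2 * d k - 2 * r^3 * x k) = 3 * r^2 * sum d S - 2 * r^3 * N"
    using assms by (simp add: sum_subtractf sum_distrib_left[symmetric])
  moreover have "3 * r^2 * sum d S - 2 * r^3 * N = (sum d S)^3 / N^2"
    using assms unfolding r_def by (simp add: field_simps power2_eq_square power3_eq_cube)
  ultimately show ?thesis by simp
qed

theorem proposition4:
  fixes K M b :: nat and N Pmax sigma2 :: real and rho_g rho_r :: "nat \<Rightarrow> real"
    and a G Nstar pstar :: "nat \<Rightarrow> real"
  assumes "K \<ge> 1" and "M \<ge> 1" and "b \<ge> 1" and "sigma2 > 0"
    and "N > 0" and "Pmax > 0"
    and "\<forall>k\<in>{1..K}. (rho_g k * rho_r k)\<^sup>2 > 0"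
  defines "a \<equiv> \<lambda>k. (rho_g k * rho_r k)\<^sup>2"
    and "G \<equiv> \<lambda>k. Gamma M sigma2 b (a k)"
    and "Nstar \<equiv> \<lambda>k. (2 / a k) powr (1/3) * N / (\<Sum>j=1..K. (2 / a j) powr (1/3))"
    and "pstar \<equiv> \<lambda>k. Pmax * (1 / (rho_g k * rho_r k * Nstar k)\<^sup>2)
                     / (\<Sum>j=1..K. 1 / (rho_g j * rho_r j * Nstar j)\<^sup>2)"
  shows "feasible K N Pmax pstar Nstar \<and>
         (\<forall>p Nt. feasible K N Pmax p Nt \<longrightarrow>
                  min_rate K G p Nt \<le> min_rate K G pstar Nstar)"
proof -
  define S where "S = {1..K}"
  have finS: "finite S" and neS: "S \<noteq> {}" using assms(1) unfolding S_def by auto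
  have apos: "\<forall>k\<in>S. a k > 0" using assms(7) unfolding S_def a_def by auto
  define d where "d = (\<lambda>k. (2 / a k) powr (1/3))"
  define D where "D = sum d S"
  have dpos: "\<forall>k\<in>S. d k > 0" using apos unfolding d_def by auto
  have Dpos: "D > 0" unfolding D_def using dpos finS neS by (simp add: sum_pos)
  have d3: "\<forall>k\<in>S. a k = 2 / (d k)^3"
  proof
    fix k assume k: "k \<in> S"
    have "(d k)^3 = ((2 / a k) powr (1/3)) powr 3"
      unfolding d_def using apos k by (simp add: powr_realpow[symmetric])
    also have "\<dots> = 2 / a k" using apos k by (simp add: powr_powr abs_of_pos)
    finally show "a k = 2 / (d k)^3" using apos k by (simp add: field_simps)
  qed
  have Ns: "Nstar = (\<lambda>k. d k * N / D)" unfolding Nstar_def d_def D_def S_def by simp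
  define K0 where "K0 = real M / sigma2 * (c_b b)^2"
  have cb: "c_b b > 0"
  proof -
    have "(2::real)^b \<ge> 2^1" using assms(3) by (intro power_increasing) auto
    hence "pi / 2^b < pi" by (simp add: divide_less_eq pi_gt_zero)
    hence "sin (pi / 2^b) > 0" by (intro sin_gt_zero) auto
    thus ?thesis unfolding c_b_def by simp
  qed
  have K0pos: "K0 > 0" unfolding K0_def using assms(2,4) cb by simp
  have Gk: "G = (\<lambda>k. K0 * a k)" unfolding G_def K0_def Gamma_def by (auto simp: fun_eq_iff)
  have e1: "\<forall>k\<in>S. 1 / (rho_g k * rho_r k * Nstar k)^2 = d k * D^2 / (2 * N^2)"
  proof
    fix k assume k: "k \<in> S"
    have "(rho_g k * rho_r k * Nstar k)^2 = a k * (Nstar k)^2"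
      unfolding a_def by (simp add: power_mult_distrib)
    also have "\<dots> = 2 / (d k)^3 * (d k * N / D)^2" using d3 k Ns by simp
    also have "\<dots> = 2 * N^2 / (d k * D^2)" using dpos k Dpos
      by (simp add: field_simps power2_eq_square power3_eq_cube)
    finally show "1 / (rho_g k * rho_r k * Nstar k)^2 = d k * D^2 / (2 * N^2)" by simp
  qed
  have sume: "(\<Sum>j=1..K. 1 / (rho_g j * rho_r j * Nstar j)\<^sup>2) = D^3 / (2 * N^2)"
  proof -
    have "(\<Sum>j=1..K. 1 / (rho_g j * rho_r j * Nstar j)\<^sup>2) = (\<Sum>j\<in>S. d j * D^2 / (2 * N^2))"
      using e1 unfolding S_def by (intro sum.cong) auto
    also have "\<dots> = D * D^2 / (2 * N^2)" unfolding D_def by (simp add: sum_divide_distrib[symmetric] sum_distrib_right[symmetric])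
    finally show ?thesis by (simp add: power2_eq_square power3_eq_cube)
  qed
  have ps: "\<forall>k\<in>S. pstar k = Pmax * d k / D"
  proof
    fix k assume k: "k \<in> S"
    have "pstar k = Pmax * (d k * D^2 / (2 * N^2)) / (D^3 / (2 * N^2))"
      unfolding pstar_def using e1 k sume by simp
    also have "\<dots> = Pmax * d k / D" using Dpos assms(5)
      by (simp add: field_simps power2_eq_square power3_eq_cube)
    finally show "pstar k = Pmax * d k / D" .
  qed
  define T where "T = 2 * K0 * Pmax * N^2 / D^3"
  have Tpos: "T > 0" unfolding T_def using K0pos assms(5,6) Dpos by simp
  have vstar: "\<forall>k\<in>S. pstar k * G k * (Nstar k)^2 = T"
  proof
    fix k assume k: "k \<in> S"
    have "d k > 0" using dpos k by auto
    then show "pstar k * G k * (Nstar k)^2 = T" unfolding T_def Gk using ps k d3 Ns Dpos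
      by (simp add: field_simps power2_eq_square power3_eq_cube)
  qed
  have feas: "feasible K N Pmax pstar Nstar"
  proof -
    have "(\<Sum>k=1..K. pstar k) = (\<Sum>k\<in>S. Pmax * d k / D)" using ps unfolding S_def by (intro sum.cong) auto
    also have "\<dots> = Pmax" unfolding D_def using Dpos D_def
      by (simp add: sum_divide_distrib[symmetric] sum_distrib_left[symmetric])
    finally have 1: "(\<Sum>k=1..K. pstar k) = Pmax" .
    have "(\<Sum>k=1..K. Nstar k) = (\<Sum>k\<in>S. d k * N / D)" unfolding Ns S_def by simp
    also have "\<dots> = N" unfolding D_def using Dpos D_def
      by (simp add: sum_divide_distrib[symmetric] sum_distrib_right[symmetric])
    finally have 2: "(\<Sum>k=1..K. Nstar k) = N" .
    have 3: "\<forall>k\<in>{1..K}. pstar k \<ge> 0 \<and> Nstar k \<ge> 0"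
      using ps dpos Dpos assms(5,6) Ns unfolding S_def by auto
    show ?thesis unfolding feasible_def using 1 2 3 by blast
  qed
  have mstar: "min_rate K G pstar Nstar = log 2 (1 + T)"
  proof -
    have "(\<lambda>k. log 2 (1 + pstar k * G k * (Nstar k)\<^sup>2)) ` {1..K} = {log 2 (1 + T)}"
      using vstar neS unfolding S_def by auto
    thus ?thesis unfolding min_rate_def by simp
  qed
  have opt: "min_rate K G p Nt \<le> log 2 (1 + T)" if f: "feasible K N Pmax p Nt" for p Nt
  proof -
    have psum: "sum p S = Pmax" and nsum: "sum Nt S = N" and nn: "\<forall>k\<in>S. p k \<ge> 0 \<and> Nt k \<ge> 0"
      using f unfolding feasible_def S_def by auto
    have "\<exists>k\<in>S. p k * G k * (Nt k)^2 \<le> T"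
    proof (rule ccontr)
      assume "\<not> ?thesis"
      hence big: "\<forall>k\<in>S. p k * G k * (Nt k)^2 > T" by auto
      have Ntpos: "\<forall>k\<in>S. Nt k > 0"
      proof
        fix k assume k: "k \<in> S"
        have "Nt k \<noteq> 0" using big k Tpos by force
        thus "Nt k > 0" using nn k by force
      qed
      have lb: "\<forall>k\<in>S. Pmax * N^2 / D^3 * (d k ^3 / (Nt k)^2) < p k"
      proof
        fix k assume k: "k \<in> S"
        have "T < p k * (K0 * (2 / (d k)^3)) * (Nt k)^2" using big k d3 Gk by simp
        hence "2 * K0 * Pmax * N^2 / D^3 < p k * (K0 * (2 / (d k)^3)) * (Nt k)^2" unfolding T_def .
        hence h: "Pmax * (N^2 * d k ^ 3) < p k * (D ^ 3 * (Nt k)^2)"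
          using dpos k Ntpos Dpos K0pos by (simp add: field_simps)
        have "d k > 0" "Nt k > 0" using dpos Ntpos k by auto
        then show "Pmax * N^2 / D^3 * (d k ^3 / (Nt k)^2) < p k" using h Dpos
          by (simp add: field_simps)
      qed
      have "(\<Sum>k\<in>S. Pmax * N^2 / D^3 * (d k ^3 / (Nt k)^2)) < sum p S"
        using lb finS neS by (intro sum_strict_mono) auto
      moreover have "(\<Sum>k\<in>S. Pmax * N^2 / D^3 * (d k ^3 / (Nt k)^2)) =
          Pmax * N^2 / D^3 * (\<Sum>k\<in>S. d k ^3 / (Nt k)^2)" by (simp add: sum_distrib_left)
      moreover have "D^3 / N^2 \<le> (\<Sum>k\<in>S. d k ^3 / (Nt k)^2)"
        unfolding D_def using sum_tangent[OF finS _ nsum assms(5)] dpos Ntpos Dpos D_def by auto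
      moreover have "Pmax * N^2 / D^3 * (D^3 / N^2) = Pmax" using Dpos assms(5) by simp
      moreover have "Pmax * N^2 / D^3 \<ge> 0" using Dpos assms(6) by simp
      ultimately show False using psum
        by (smt (verit, best) mult_left_mono)
    qed
    then obtain k where k: "k \<in> S" "p k * G k * (Nt k)^2 \<le> T" by auto
    have v0: "p k * G k * (Nt k)^2 \<ge> 0" proof -
      have "p k \<ge> 0" "a k > 0" using nn apos k by auto
      thus ?thesis using Gk K0pos by simp
    qed
    have "min_rate K G p Nt \<le> log 2 (1 + p k * G k * (Nt k)^2)"
      unfolding min_rate_def using k finS unfolding S_def by (intro Min_le) auto
    also have "\<dots> \<le> log 2 (1 + T)" using k v0 by simp
    finally show ?thesis .
  qed
  show ?thesis using feas opt mstar by simp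
qed

end
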